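(* Let $\lambda=(\lambda_1,\ldots,\lambda_\ell)$ be a partition with $\ell$ positive parts. If $2\leq\ell<n$ and $\lambda_2\geq 2$, then the poset $\mathcal B_\lambda^n$ is not a lattice.
   Context: For $N\geq 1$ and a partition $\nu$ with at most $N$ positive parts, $\mathcal B_\nu^N$ is the set of semistandard Young tableaux of shape $\nu$ (rows weakly increasing, columns strictly increasing) with entries in $\{1,\ldots,N+1\}$, partially ordered by the reflexive transitive closure of $T<F_i(T)$ for $i\in\{1,\ldots,N\}$ with $F_i(T)\neq 0$. Here $F_i$ is the type A crystal lowering operator: in the reading word of $T$ (rows read from bottom to top, each row left to right) keep only letters $i$ and $i+1$, replace each $i$ by ")" and each $i+1$ by "(", and match parentheses in the usual way; if there is no unmatched ")", $F_i(T)=0$; otherwise $F_i(T)$ is obtained by changing the entry $i$ corresponding to the rightmost unmatched ")" into $i+1$. *)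

theory Defs
  imports "HOL-Algebra.Lattice"
begin

definition is_partition :: "nat list \<Rightarrow> bool" where
  "is_partition lam \<longleftrightarrow> sorted_wrt (\<ge>) lam \<and> (\<forall>x\<in>set lam. 0 < x)"

(* Tableaux are lists of rows (row 0 = top row, English convention). *)
definition ssyt :: "nat \<Rightarrow> nat list \<Rightarrow> nat list list \<Rightarrow> bool" where
  "ssyt N \<nu> T \<longleftrightarrow>
     map length T = \<nu> \<and>
     (\<forall>r < length T. sorted (T ! r)) \<and>
     (\<forall>r c. Suc r < length T \<and> c < length (T ! Suc r) \<longrightarrow> T ! r ! c < T ! Suc r ! c) \<and>
     (\<forall>row \<in> set T. \<forall>x \<in> set row. 1 \<le> x \<and> x \<le> N + 1)"

definition tabB :: "nat list \<Rightarrow> nat \<Rightarrow> nat list list set" where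
  "tabB \<nu> N = {T. ssyt N \<nu> T}"

definition reading_word :: "nat list list \<Rightarrow> nat list" where
  "reading_word T = concat (rev T)"

(* Positions of unmatched ")" (letters i) in the word, where i is ")" and i+1 is "(";
   k counts currently open (unmatched so far) "(" and p is the current position. *)
fun unmatched :: "nat \<Rightarrow> nat \<Rightarrow> nat \<Rightarrow> nat list \<Rightarrow> nat list" where
  "unmatched i k p [] = []"
| "unmatched i k p (x # xs) =
     (if x = i + 1 then unmatched i (Suc k) (Suc p) xs
      else if x = i then
        (if 0 < k then unmatched i (k - 1) (Suc p) xs else p # unmatched i 0 (Suc p) xs)
      else unmatched i k (Suc p) xs)"

fun split_lens :: "nat list \<Rightarrow> 'a list \<Rightarrow> 'a list list" where
  "split_lens [] xs = []"
| "split_lens (l # ls) xs = take l xs # split_lens ls (drop l xs)"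

(* Crystal lowering operator F_i; None encodes F_i(T) = 0. *)
definition crystal_F :: "nat \<Rightarrow> nat list list \<Rightarrow> nat list list option" where
  "crystal_F i T =
     (let w = reading_word T; u = unmatched i 0 0 w in
      if u = [] then None
      else Some (rev (split_lens (map length (rev T)) (w[last u := i + 1]))))"

definition crystal_step :: "nat list \<Rightarrow> nat \<Rightarrow> (nat list list \<times> nat list list) set" where
  "crystal_step \<nu> N = {(T, T'). T \<in> tabB \<nu> N \<and> (\<exists>i \<in> {1..N}. crystal_F i T = Some T')}"

definition crystal_le :: "nat list \<Rightarrow> nat \<Rightarrow> nat list list \<Rightarrow> nat list list \<Rightarrow> bool" where
  "crystal_le \<nu> N T T' \<longleftrightarrow> (T, T') \<in> (crystal_step \<nu> N)\<^sup>*"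

definition crystal_poset :: "nat list \<Rightarrow> nat \<Rightarrow> nat list list gorder" where
  "crystal_poset \<nu> N = \<lparr>carrier = tabB \<nu> N, eq = (=), le = crystal_le \<nu> N\<rparr>"

end

theory Submission
  imports Defs
begin

definition tsum :: "nat list list \<Rightarrow> nat" where
  "tsum T = sum_list (concat T)"

lemma split_concat: "sum_list ls = length xs \<Longrightarrow> concat (split_lens ls xs) = xs"
  by (induction ls arbitrary: xs) auto

lemma split_concat2: "split_lens (map length Ts) (concat Ts) = Ts"
  by (induction Ts) auto

lemma unm_set: "j \<in> set (unmatched i k p w) \<Longrightarrow> p \<le> j \<and> j < p + length w \<and> w ! (j - p) = i"
proof (induction w arbitrary: k p)
  case Nil then show ?case by simp
next
  case (Cons x w)
  show ?case
  proof (cases "j = p")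
    case True
    then show ?thesis using Cons.prems Cons.IH[of k "Suc p"] Cons.IH[of "Suc k" "Suc p"] Cons.IH[of "k - 1" "Suc p"] Cons.IH[of 0 "Suc p"] by (auto split: if_splits)
  next
    case False
    then show ?thesis using Cons.prems
      by (auto split: if_splits dest!: Cons.IH simp: nth_Cons' Suc_diff_Suc)
  qed
qed

lemma unm_shift: "unmatched i k (p + d) ys = map (\<lambda>x. x + d) (unmatched i k p ys)"
proof (induction ys arbitrary: k p)
  case Nil then show ?case by simp
next
  case (Cons a ys)
  have "\<And>k. unmatched i k (Suc (p + d)) ys = map (\<lambda>x. x + d) (unmatched i k (Suc p) ys)"
    using Cons.IH[of _ "Suc p"] by simp
  then show ?case by simp
qed

lemma unm_shift0: "unmatched i k d ys = map (\<lambda>x. x + d) (unmatched i k 0 ys)"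
  using unm_shift[of i k 0 d ys] by simp

lemma unm_skip: "\<forall>x\<in>set xs. x \<noteq> i \<and> x \<noteq> Suc i \<Longrightarrow>
    unmatched i k p (xs @ ys) = unmatched i k (p + length xs) ys"
  by (induction xs arbitrary: k p) auto

lemma unm_open: "unmatched i k p (replicate m (Suc i) @ ys) = unmatched i (k + m) (p + m) ys"
  by (induction m arbitrary: k p) auto

lemma unm_close: "unmatched i k p (replicate m i @ ys) = [p + k..<p + m] @ unmatched i (k - m) (p + m) ys"
proof (induction m arbitrary: k p)
  case 0 then show ?case by simp
next
  case (Suc m)
  show ?case
  proof (cases k)
    case 0
    then show ?thesis using Suc.IH[of 0 "Suc p"] by (simp add: upt_rec)
  next
    case (Suc k')
    then show ?thesis using Suc.IH[of k' "Suc p"] by simp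
  qed
qed

lemma F_word:
  assumes "crystal_F i T = Some T'"
  shows "\<exists>j < length (reading_word T). reading_word T ! j = i \<and>
           reading_word T' = (reading_word T)[j := Suc i]"
proof -
  define w where "w = reading_word T"
  define u where "u = unmatched i 0 0 w"
  have u: "u \<noteq> []" and T': "T' = rev (split_lens (map length (rev T)) (w[last u := i + 1]))"
    using assms unfolding crystal_F_def Let_def w_def u_def by (auto split: if_splits)
  have "last u \<in> set u" using u by simp
  then have j: "last u < length w \<and> w ! last u = i" using unm_set[of "last u" i 0 0 w] u_def by simp
  have "sum_list (map length (rev T)) = length (w[last u := i + 1])"
    by (simp add: w_def reading_word_def length_concat)
  then have "reading_word T' = w[last u := i + 1]"
    unfolding T' reading_word_def by (simp add: split_concat)
  then show ?thesis using j unfolding w_def by auto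
qed

lemma sum_upd: "j < length w \<Longrightarrow> w ! j = i \<Longrightarrow> sum_list (w[j := Suc i]) = Suc (sum_list w)"
  by (induction w arbitrary: j) (auto simp: nth_Cons' split: if_splits nat.splits)

lemma sl_concat: "sum_list (concat xs) = sum_list (map sum_list (xs::nat list list))"
  by (induction xs) auto

lemma tsum_rw: "tsum T = sum_list (reading_word T)"
  unfolding tsum_def reading_word_def by (simp add: sl_concat sum_list_rev rev_map[symmetric])

lemma F_sum: "crystal_F i T = Some T' \<Longrightarrow> tsum T' = Suc (tsum T)"
  using F_word[of i T T'] sum_upd by (auto simp: tsum_rw)

lemma le_sum: "(T, T') \<in> (crystal_step lam n)\<^sup>* \<Longrightarrow> tsum T \<le> tsum T' \<and> (tsum T = tsum T' \<longrightarrow> T = T')"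
proof (induction rule: rtrancl_induct)
  case base then show ?case by simp
next
  case (step y z)
  then have "tsum z = Suc (tsum y)" using F_sum unfolding crystal_step_def by auto
  then show ?case using step by auto
qed

lemma one_step: "(T, T') \<in> (crystal_step lam n)\<^sup>* \<Longrightarrow> tsum T' = Suc (tsum T) \<Longrightarrow> (T, T') \<in> crystal_step lam n"
proof (erule rtranclE)
  assume "T = T'" "tsum T' = Suc (tsum T)" then show ?thesis by simp
next
  fix y assume a: "(T, y) \<in> (crystal_step lam n)\<^sup>*" "(y, T') \<in> crystal_step lam n" "tsum T' = Suc (tsum T)"
  then have "tsum T' = Suc (tsum y)" using F_sum unfolding crystal_step_def by auto
  then have "y = T" using le_sum[OF a(1)] a(3) by auto
  then show ?thesis using a by simp
qed

lemma F_mk: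
  assumes "\<forall>x\<in>set (concat (rev R)). x \<noteq> i \<and> x \<noteq> Suc i"
    and "unmatched i 0 0 (r1 @ r0) = u" "u \<noteq> []"
    and "(r1 @ r0)[last u := Suc i] = r1' @ r0'"
    and "length r1' = length r1" "length r0' = length r0"
  shows "crystal_F i (r0 # r1 # R) = Some (r0' # r1' # R)"
proof -
  define pre where "pre = concat (rev R)"
  have w: "reading_word (r0 # r1 # R) = pre @ (r1 @ r0)" by (simp add: reading_word_def pre_def)
  have un: "unmatched i 0 0 (pre @ (r1 @ r0)) = map (\<lambda>x. x + length pre) u"
    using unm_skip[of pre i 0 0 "r1 @ r0"] assms(1,2) unm_shift0[of i 0 "length pre" "r1 @ r0"]
    unfolding pre_def by simp
  have ne: "map (\<lambda>x. x + length pre) u \<noteq> []" using assms(3) by simp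
  have lst: "last (map (\<lambda>x. x + length pre) u) = last u + length pre" using assms(3) by (simp add: last_map)
  have upd: "(pre @ (r1 @ r0))[last u + length pre := Suc i] = concat (rev (r0' # r1' # R))"
    using assms(4) by (simp add: list_update_append pre_def)
  have ml: "map length (rev (r0 # r1 # R)) = map length (rev (r0' # r1' # R))" using assms(5,6) by simp
  show ?thesis
    unfolding crystal_F_def Let_def w un using ne
    apply (simp only: lst if_False Suc_eq_plus1[symmetric] upd ml split_concat2)
    by simp
qed


definition restrows :: "nat list \<Rightarrow> nat \<Rightarrow> nat list list" where
  "restrows lam n = map (\<lambda>r. replicate (lam ! r) (n - length lam + 2 + r)) [2..<length lam]"

lemma restrows_nth:
  assumes "2 \<le> j" "j < length lam" "2 \<le> length lam"
  shows "(r0 # r1 # restrows lam n) ! j = replicate (lam ! j) (n - length lam + 2 + j)"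
proof -
  obtain j' where j': "j = Suc (Suc j')" using assms(1) by (metis add_2_eq_Suc le_Suc_ex)
  show ?thesis using assms unfolding restrows_def j' by (simp add: nth_append)
qed

lemma restrows_len: "length (restrows lam n) = length lam - 2"
  by (simp add: restrows_def)

lemma restrows_set: "x \<in> set (concat (restrows lam n)) \<Longrightarrow> length lam < n \<Longrightarrow>
   n - length lam + 4 \<le> x \<and> x \<le> n + 1"
  unfolding restrows_def by (auto split: if_splits)

lemma ssyt_mk:
  assumes lam: "is_partition lam" "2 \<le> length lam" "length lam < n"
    and len: "length r0 = lam ! 0" "length r1 = lam ! 1"
    and srt: "sorted r0" "sorted r1"
    and rng: "\<forall>x\<in>set r0. 1 \<le> x \<and> x \<le> 4" "\<forall>x\<in>set r1. 1 \<le> x \<and> x \<le> 4"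
    and col: "\<forall>c<length r1. r0 ! c < r1 ! c"
  shows "ssyt n lam (r0 # r1 # restrows lam n)"
proof -
  define T where "T = r0 # r1 # restrows lam n"
  define l where "l = length lam"
  have lT: "length T = l" using lam(2) by (simp add: T_def restrows_len l_def)
  have Tj: "\<And>j. 2 \<le> j \<Longrightarrow> j < l \<Longrightarrow> T ! j = replicate (lam ! j) (n - l + 2 + j)"
    unfolding T_def l_def using restrows_nth lam(2) by blast
  have dec: "\<And>a b. a \<le> b \<Longrightarrow> b < l \<Longrightarrow> lam ! b \<le> lam ! a"
  proof -
    fix a b assume "a \<le> b" "b < l"
    then show "lam ! b \<le> lam ! a" using lam(1) unfolding is_partition_def l_def
      by (metis le_neq_implies_less order_refl sorted_wrt_nth_less)
  qed
  have ml: "map length T = lam"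
  proof (rule nth_equalityI)
    show "length (map length T) = length lam" using lT l_def by simp
    fix j assume "j < length (map length T)"
    then have j: "j < l" using lT by simp
    show "map length T ! j = lam ! j"
    proof (cases "j < 2")
      case True
      then have "j = 0 \<or> j = 1" by auto
      then show ?thesis using len by (auto simp: T_def)
    next
      case False
      then show ?thesis using Tj[of j] j lT by simp
    qed
  qed
  have srows: "\<forall>r < length T. sorted (T ! r)"
  proof (intro allI impI)
    fix r assume "r < length T"
    then show "sorted (T ! r)"
      using srt Tj[of r] lT by (cases "r < 2") (auto simp: T_def less_2_cases_iff)
  qed
  have cols: "\<forall>r c. Suc r < length T \<and> c < length (T ! Suc r) \<longrightarrow> T ! r ! c < T ! Suc r ! c"
  proof (intro allI impI)
    fix r c assume a: "Suc r < length T \<and> c < length (T ! Suc r)"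
    then have rl: "Suc r < l" and cl: "c < lam ! Suc r" using lT ml
      by (auto simp: nth_map[symmetric] simp del: nth_map)
    show "T ! r ! c < T ! Suc r ! c"
    proof (cases "r = 0")
      case True
      then show ?thesis using a col by (simp add: T_def)
    next
      case False
      show ?thesis
      proof (cases "r = 1")
        case True
        have "lam ! 2 \<le> lam ! 1" using dec[of 1 2] rl True by simp
        then have c1: "c < length r1" using cl True len by (simp add: numeral_2_eq_2)
        then have "r1 ! c \<le> 4" using rng by auto
        moreover have "T ! Suc r ! c = n - l + 4" using Tj[of 2] rl True cl by (simp add: numeral_2_eq_2)
        moreover have "n - l + 4 > 4" using lam(3) l_def by simp
        ultimately show ?thesis using True by (simp add: T_def)
      next
        case False
        then have r2: "2 \<le> r" using \<open>r \<noteq> 0\<close> by simp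
        have "lam ! Suc r \<le> lam ! r" using dec[of r "Suc r"] rl by simp
        then show ?thesis using Tj[of r] Tj[of "Suc r"] r2 rl cl by simp
      qed
    qed
  qed
  have ents: "\<forall>row \<in> set T. \<forall>x \<in> set row. 1 \<le> x \<and> x \<le> n + 1"
  proof (intro ballI)
    fix row x assume "row \<in> set T" "x \<in> set row"
    then have "row = r0 \<or> row = r1 \<or> x \<in> set (concat (restrows lam n))" by (auto simp: T_def)
    then show "1 \<le> x \<and> x \<le> n + 1" using rng restrows_set[of x lam n] lam(2,3) \<open>x \<in> set row\<close> by fastforce
  qed
  show ?thesis unfolding ssyt_def T_def[symmetric] using ml srows cols ents lT l_def by simp
qed


lemma unm_rep: "unmatched i k p (replicate m x @ ys) =
  (if x = Suc i then unmatched i (k + m) (p + m) ys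
   else if x = i then [p + k..<p + m] @ unmatched i (k - m) (p + m) ys
   else unmatched i k (p + m) ys)"
  using unm_open[of i k p m ys] unm_close[of i k p m ys] unm_skip[of "replicate m x" i k p ys] by auto

lemma unm_rep0: "unmatched i k p (replicate m x) =
  (if x = Suc i then []
   else if x = i then [p + k..<p + m]
   else [])"
  using unm_rep[of i k p m x "[]"] by (simp split: if_splits)

lemma F_mk':
  assumes "\<forall>x\<in>set (concat R). 5 \<le> x" "i \<le> 3"
    and "unmatched i 0 0 (r1 @ r0) \<noteq> [] \<and> last (unmatched i 0 0 (r1 @ r0)) = j"
    and "(r1 @ r0)[j := Suc i] = r1' @ r0'"
    and "length r1' = length r1" "length r0' = length r0"
  shows "crystal_F i (r0 # r1 # R) = Some (r0' # r1' # R)"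
proof (rule F_mk[where u="unmatched i 0 0 (r1 @ r0)"])
  show "\<forall>x\<in>set (concat (rev R)). x \<noteq> i \<and> x \<noteq> Suc i"
  proof
    fix x assume "x \<in> set (concat (rev R))"
    then have "5 \<le> x" using assms(1) by auto
    then show "x \<noteq> i \<and> x \<noteq> Suc i" using assms(2) by auto
  qed
qed (use assms in auto)

lemma last_upt': "a < b \<Longrightarrow> last [a..<b] = b - 1"
  by (induction b) (auto simp: less_Suc_eq)

lemma upd_at: "n = length xs \<Longrightarrow> (xs @ y # zs)[n := v] = xs @ v # zs"
  by simp

definition "Z1 P Q = replicate (P+Q+2) (1::nat)"
definition "Z2 P Q = replicate (P+Q+1) (1::nat) @ [2]"
definition "Z3 P Q = replicate (P+Q+1) (1::nat) @ [3]"
definition "A1 Q = replicate Q (2::nat) @ [2,4]"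
definition "A2 Q = replicate Q (2::nat) @ [2,3]"
definition "B1 Q = replicate Q (2::nat) @ [3,4]"
definition "B2 Q = replicate Q (2::nat) @ [3,3]"

context
  fixes P Q :: nat and R :: "nat list list"
  assumes R5: "\<forall>x\<in>set (concat R). 5 \<le> x"
begin

lemma stepa: "crystal_F 1 ((Z1 P Q) # (A1 Q) # R) = Some ((Z2 P Q) # (A1 Q) # R)"
proof (rule F_mk'[OF R5, where j="P+2*Q+3"])
  show "unmatched 1 0 0 ((A1 Q) @ (Z1 P Q)) \<noteq> [] \<and> last (unmatched 1 0 0 ((A1 Q) @ (Z1 P Q))) = P+2*Q+3"
    by (simp add: A1_def Z1_def unm_rep unm_rep0 last_upt' del: upt_Suc)
  have eq: "(A1 Q) @ (Z1 P Q) = ((A1 Q) @ replicate (P+Q+1) 1) @ 1 # []"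
    by (simp add: Z1_def replicate_append_same)
  show "((A1 Q) @ (Z1 P Q))[P+2*Q+3 := Suc 1] = (A1 Q) @ (Z2 P Q)"
    unfolding eq by (subst upd_at) (simp_all add: A1_def Z2_def)
qed (auto simp: A1_def Z1_def Z2_def)

lemma stepb: "crystal_F 3 ((Z2 P Q) # (A2 Q) # R) = Some ((Z2 P Q) # (A1 Q) # R)"
proof (rule F_mk'[OF R5, where j="Q+1"])
  show "unmatched 3 0 0 ((A2 Q) @ (Z2 P Q)) \<noteq> [] \<and> last (unmatched 3 0 0 ((A2 Q) @ (Z2 P Q))) = Q+1"
    by (simp add: A2_def Z2_def unm_rep unm_rep0 last_upt' del: upt_Suc)
  have eq: "(A2 Q) @ (Z2 P Q) = (replicate Q 2 @ [2]) @ 3 # (Z2 P Q)" by (simp add: A2_def)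
  show "((A2 Q) @ (Z2 P Q))[Q+1 := Suc 3] = (A1 Q) @ (Z2 P Q)"
    unfolding eq by (subst upd_at) (simp_all add: A1_def)
qed (auto simp: A1_def A2_def)

lemma stepc: "crystal_F 2 ((Z1 P Q) # (A1 Q) # R) = Some ((Z1 P Q) # (B1 Q) # R)"
proof (rule F_mk'[OF R5, where j="Q"])
  show "unmatched 2 0 0 ((A1 Q) @ (Z1 P Q)) \<noteq> [] \<and> last (unmatched 2 0 0 ((A1 Q) @ (Z1 P Q))) = Q"
    by (simp add: A1_def Z1_def unm_rep unm_rep0 last_upt' del: upt_Suc)
  have eq: "(A1 Q) @ (Z1 P Q) = replicate Q 2 @ 2 # (4 # (Z1 P Q))" by (simp add: A1_def)
  show "((A1 Q) @ (Z1 P Q))[Q := Suc 2] = (B1 Q) @ (Z1 P Q)"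
    unfolding eq by (subst upd_at) (simp_all add: B1_def)
qed (auto simp: A1_def B1_def)

lemma stepd: "crystal_F 1 ((Z1 P Q) # (B1 Q) # R) = Some ((Z2 P Q) # (B1 Q) # R)"
proof (rule F_mk'[OF R5, where j="P+2*Q+3"])
  show "unmatched 1 0 0 ((B1 Q) @ (Z1 P Q)) \<noteq> [] \<and> last (unmatched 1 0 0 ((B1 Q) @ (Z1 P Q))) = P+2*Q+3"
    by (simp add: B1_def Z1_def unm_rep unm_rep0 last_upt' del: upt_Suc) arith
  have eq: "(B1 Q) @ (Z1 P Q) = ((B1 Q) @ replicate (P+Q+1) 1) @ 1 # []"
    by (simp add: Z1_def replicate_append_same)
  show "((B1 Q) @ (Z1 P Q))[P+2*Q+3 := Suc 1] = (B1 Q) @ (Z2 P Q)"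
    unfolding eq by (subst upd_at) (simp_all add: B1_def Z2_def)
qed (auto simp: B1_def Z1_def Z2_def)

lemma stepe: "crystal_F 2 ((Z2 P Q) # (A2 Q) # R) = Some ((Z2 P Q) # (B2 Q) # R)"
proof (rule F_mk'[OF R5, where j="Q"])
  show "unmatched 2 0 0 ((A2 Q) @ (Z2 P Q)) \<noteq> [] \<and> last (unmatched 2 0 0 ((A2 Q) @ (Z2 P Q))) = Q"
    by (simp add: A2_def Z2_def unm_rep unm_rep0 last_upt' del: upt_Suc)
  have eq: "(A2 Q) @ (Z2 P Q) = replicate Q 2 @ 2 # (3 # (Z2 P Q))" by (simp add: A2_def)
  show "((A2 Q) @ (Z2 P Q))[Q := Suc 2] = (B2 Q) @ (Z2 P Q)"
    unfolding eq by (subst upd_at) (simp_all add: B2_def)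
qed (auto simp: A2_def B2_def)

lemma stepf: "crystal_F 3 ((Z2 P Q) # (B2 Q) # R) = Some ((Z2 P Q) # (B1 Q) # R)"
proof (rule F_mk'[OF R5, where j="Q+1"])
  show "unmatched 3 0 0 ((B2 Q) @ (Z2 P Q)) \<noteq> [] \<and> last (unmatched 3 0 0 ((B2 Q) @ (Z2 P Q))) = Q+1"
    by (simp add: B2_def Z2_def unm_rep unm_rep0 last_upt' del: upt_Suc)
  have eq: "(B2 Q) @ (Z2 P Q) = (replicate Q 2 @ [3]) @ 3 # (Z2 P Q)" by (simp add: B2_def)
  show "((B2 Q) @ (Z2 P Q))[Q+1 := Suc 3] = (B1 Q) @ (Z2 P Q)"
    unfolding eq by (subst upd_at) (simp_all add: B1_def)
qed (auto simp: B1_def B2_def)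

lemma stepg: "crystal_F 2 ((Z2 P Q) # (A1 Q) # R) = Some ((Z3 P Q) # (A1 Q) # R)"
proof (rule F_mk'[OF R5, where j="P+2*Q+3"])
  show "unmatched 2 0 0 ((A1 Q) @ (Z2 P Q)) \<noteq> [] \<and> last (unmatched 2 0 0 ((A1 Q) @ (Z2 P Q))) = P+2*Q+3"
    by (simp add: A1_def Z2_def unm_rep unm_rep0 last_upt' del: upt_Suc)
  have eq: "(A1 Q) @ (Z2 P Q) = ((A1 Q) @ replicate (P+Q+1) 1) @ 2 # []"
    by (simp add: Z2_def)
  show "((A1 Q) @ (Z2 P Q))[P+2*Q+3 := Suc 2] = (A1 Q) @ (Z3 P Q)"
    unfolding eq by (subst upd_at) (simp_all add: A1_def Z3_def)
qed (auto simp: A1_def Z2_def Z3_def)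

end

lemma col_help:
  fixes r0 r1 :: "nat list"
  assumes "length r1 \<le> length r0" "\<forall>x\<in>set r1. 2 \<le> x" "3 \<le> r1 ! (length r1 - 1)"
    "\<forall>c<length r0 - 1. r0 ! c = 1" "\<forall>x\<in>set r0. x \<le> 2"
  shows "\<forall>c<length r1. r0 ! c < r1 ! c"
proof (intro allI impI)
  fix c assume c: "c < length r1"
  have r1c: "2 \<le> r1 ! c" using assms(2) c by auto
  have r0c: "r0 ! c \<le> 2" using assms(5) c assms(1) by auto
  show "r0 ! c < r1 ! c"
  proof (cases "c < length r0 - 1")
    case True then show ?thesis using assms(4) r1c by auto
  next
    case False
    then have "c = length r1 - 1" using c assms(1) by auto
    then show ?thesis using assms(3) r0c by auto
  qed
qed

theorem lemma5p8:
  fixes lam :: "nat list" and n :: nat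
  assumes "is_partition lam"
    and "2 \<le> length lam" and "length lam < n"
    and "lam ! 1 \<ge> 2"
  shows "\<not> lattice (crystal_poset lam n)"
proof
  assume lat: "lattice (crystal_poset lam n)"
  define L where "L = crystal_poset lam n"
  define Q where "Q = lam ! 1 - 2"
  have q: "lam ! 1 = Q + 2" using assms(4) Q_def by simp
  have "lam ! 1 \<le> lam ! 0" using assms(1,2) unfolding is_partition_def
    by (metis One_nat_def less_2_cases_iff less_le_trans order.strict_implies_order sorted_wrt_nth_less zero_less_one)
  then obtain P where p: "lam ! 0 = P + Q + 2" using q by (metis add.commute le_Suc_ex add.assoc)
  define R where "R = restrows lam n"
  have R5: "\<forall>x\<in>set (concat R). 5 \<le> x" using restrows_set[of _ lam n] assms(3) unfolding R_def by fastforce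
  note defs = Z1_def Z2_def Z3_def A1_def A2_def B1_def B2_def
  have mk: "\<And>r0 r1. length r0 = P + Q + 2 \<Longrightarrow> length r1 = Q + 2 \<Longrightarrow> sorted r0 \<Longrightarrow> sorted r1 \<Longrightarrow>
      \<forall>x\<in>set r0. 1 \<le> x \<and> x \<le> 2 \<Longrightarrow> \<forall>x\<in>set r1. 2 \<le> x \<and> x \<le> 4 \<Longrightarrow> 3 \<le> r1 ! (Q + 1) \<Longrightarrow>
      \<forall>c<P + Q + 1. r0 ! c = 1 \<Longrightarrow> r0 # r1 # R \<in> carrier L"
  proof -
    fix r0 r1 :: "nat list"
    assume h: "length r0 = P + Q + 2" "length r1 = Q + 2" "sorted r0" "sorted r1"
      "\<forall>x\<in>set r0. 1 \<le> x \<and> x \<le> 2" "\<forall>x\<in>set r1. 2 \<le> x \<and> x \<le> 4" "3 \<le> r1 ! (Q + 1)"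
      "\<forall>c<P + Q + 1. r0 ! c = 1"
    have "\<forall>c<length r1. r0 ! c < r1 ! c"
      by (rule col_help) (use h in auto)
    then have "ssyt n lam (r0 # r1 # restrows lam n)"
      using h p q by (intro ssyt_mk assms) auto
    then show "r0 # r1 # R \<in> carrier L" by (simp add: L_def crystal_poset_def tabB_def R_def)
  qed
  have sZ1: "sorted (Z1 P Q)" by (simp add: defs)
  have sZ2: "sorted (Z2 P Q)" by (simp add: defs sorted_append)
  have sA1: "sorted (A1 Q)" by (simp add: defs sorted_append)
  have sA2: "sorted (A2 Q)" by (simp add: defs sorted_append)
  have sB1: "sorted (B1 Q)" by (simp add: defs sorted_append)
  have sB2: "sorted (B2 Q)" by (simp add: defs sorted_append)
  have z1: "\<forall>c<P + Q + 1. Z1 P Q ! c = 1" unfolding Z1_def by (simp del: replicate.simps)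
  have z2: "\<forall>c<P + Q + 1. Z2 P Q ! c = 1" unfolding Z2_def by (simp add: nth_append del: replicate.simps)
  have z1s: "\<forall>x\<in>set (Z1 P Q). 1 \<le> x \<and> x \<le> 2" "length (Z1 P Q) = P + Q + 2" by (simp_all add: Z1_def)
  have z2s: "\<forall>x\<in>set (Z2 P Q). 1 \<le> x \<and> x \<le> 2" "length (Z2 P Q) = P + Q + 2" by (simp_all add: Z2_def)
  have a1s: "\<forall>x\<in>set (A1 Q). 2 \<le> x \<and> x \<le> 4" "length (A1 Q) = Q + 2" "3 \<le> A1 Q ! (Q + 1)"
    by (simp_all add: A1_def nth_append)
  have a2s: "\<forall>x\<in>set (A2 Q). 2 \<le> x \<and> x \<le> 4" "length (A2 Q) = Q + 2" "3 \<le> A2 Q ! (Q + 1)"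
    by (simp_all add: A2_def nth_append)
  have b1s: "\<forall>x\<in>set (B1 Q). 2 \<le> x \<and> x \<le> 4" "length (B1 Q) = Q + 2" "3 \<le> B1 Q ! (Q + 1)"
    by (simp_all add: B1_def nth_append)
  have b2s: "\<forall>x\<in>set (B2 Q). 2 \<le> x \<and> x \<le> 4" "length (B2 Q) = Q + 2" "3 \<le> B2 Q ! (Q + 1)"
    by (simp_all add: B2_def nth_append)
  have c1C: "Z1 P Q # A1 Q # R \<in> carrier L" by (rule mk[OF z1s(2) a1s(2) sZ1 sA1 z1s(1) a1s(1) a1s(3) z1])
  have c2C: "Z2 P Q # A2 Q # R \<in> carrier L" by (rule mk[OF z2s(2) a2s(2) sZ2 sA2 z2s(1) a2s(1) a2s(3) z2])
  have aC: "Z2 P Q # A1 Q # R \<in> carrier L" by (rule mk[OF z2s(2) a1s(2) sZ2 sA1 z2s(1) a1s(1) a1s(3) z2])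
  have bC: "Z2 P Q # B1 Q # R \<in> carrier L" by (rule mk[OF z2s(2) b1s(2) sZ2 sB1 z2s(1) b1s(1) b1s(3) z2])
  have c1'C: "Z1 P Q # B1 Q # R \<in> carrier L" by (rule mk[OF z1s(2) b1s(2) sZ1 sB1 z1s(1) b1s(1) b1s(3) z1])
  have c2'C: "Z2 P Q # B2 Q # R \<in> carrier L" by (rule mk[OF z2s(2) b2s(2) sZ2 sB2 z2s(1) b2s(1) b2s(3) z2])
  have n3: "3 \<le> n" using assms(2,3) by simp
  have st: "\<And>T T' i. T \<in> carrier L \<Longrightarrow> crystal_F i T = Some T' \<Longrightarrow> 1 \<le> i \<Longrightarrow> i \<le> 3 \<Longrightarrow>
      (T, T') \<in> crystal_step lam n"
    using n3 by (auto simp: crystal_step_def L_def crystal_poset_def)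
  have leL: "\<And>x y. le L x y \<longleftrightarrow> (x, y) \<in> (crystal_step lam n)\<^sup>*"
    by (simp add: L_def crystal_poset_def crystal_le_def)
  define a where "a = Z2 P Q # A1 Q # R"
  define b where "b = Z2 P Q # B1 Q # R"
  define c1 where "c1 = Z1 P Q # A1 Q # R"
  define c2 where "c2 = Z2 P Q # A2 Q # R"
  have Fa: "crystal_F 1 c1 = Some a" using stepa[OF R5] by (simp add: a_def c1_def)
  have Fb: "crystal_F 3 c2 = Some a" using stepb[OF R5] by (simp add: a_def c2_def)
  have Fc: "crystal_F 2 c1 = Some (Z1 P Q # B1 Q # R)" using stepc[OF R5] by (simp add: c1_def)
  have Fd: "crystal_F 1 (Z1 P Q # B1 Q # R) = Some b" using stepd[OF R5] by (simp add: b_def)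
  have Fe: "crystal_F 2 c2 = Some (Z2 P Q # B2 Q # R)" using stepe[OF R5] by (simp add: c2_def)
  have Ff: "crystal_F 3 (Z2 P Q # B2 Q # R) = Some b" using stepf[OF R5] by (simp add: b_def)
  have Fg: "crystal_F 2 a = Some (Z3 P Q # A1 Q # R)" using stepg[OF R5] by (simp add: a_def)
  have c1a: "le L c1 a" unfolding leL using st[OF c1C[folded c1_def] Fa] by auto
  have c2a: "le L c2 a" unfolding leL using st[OF c2C[folded c2_def] Fb] by auto
  have c1b: "le L c1 b" unfolding leL
    using st[OF c1C[folded c1_def] Fc] st[OF c1'C Fd] by (simp add: r_into_rtrancl rtrancl_into_rtrancl)
  have c2b: "le L c2 b" unfolding leL
    using st[OF c2C[folded c2_def] Fe] st[OF c2'C Ff] by (simp add: r_into_rtrancl rtrancl_into_rtrancl)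
  have tsa1: "tsum a = Suc (tsum c1)" using F_sum[OF Fa] .
  have tsa2: "tsum a = Suc (tsum c2)" using F_sum[OF Fb] .
  have tsb: "tsum b = Suc (tsum a)" using F_sum[OF Fc] F_sum[OF Fd] tsa1 by simp
  have c12: "c1 \<noteq> c2" by (simp add: c1_def c2_def defs)
  have aC': "a \<in> carrier L" using aC a_def by simp
  have bC': "b \<in> carrier L" using bC b_def by simp
  interpret lower_semilattice L using lat unfolding L_def lattice_def by simp
  obtain g where g: "greatest L g (Lower L {a, b})" using inf_of_two_exists[OF aC' bC'] by blast
  have gC: "g \<in> carrier L" and ga: "le L g a" and gb: "le L g b"
    using g aC' bC' by (auto simp: greatest_def Lower_def)
  have "c1 \<in> Lower L {a, b}" using c1a c1b c1C by (auto simp: Lower_def c1_def)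
  then have c1g: "le L c1 g" using g by (auto simp: greatest_def)
  have "c2 \<in> Lower L {a, b}" using c2a c2b c2C by (auto simp: Lower_def c2_def)
  then have c2g: "le L c2 g" using g by (auto simp: greatest_def)
  have s1: "tsum c1 \<le> tsum g \<and> (tsum c1 = tsum g \<longrightarrow> c1 = g)" using le_sum c1g leL by blast
  have s2: "tsum c2 \<le> tsum g \<and> (tsum c2 = tsum g \<longrightarrow> c2 = g)" using le_sum c2g leL by blast
  have s3: "tsum g \<le> tsum a \<and> (tsum g = tsum a \<longrightarrow> g = a)" using le_sum ga leL by blast
  have "g = a" using s1 s2 s3 tsa1 tsa2 c12 by (cases "tsum g = tsum a") auto
  then have "(a, b) \<in> (crystal_step lam n)\<^sup>*" using gb leL by simp
  then have "(a, b) \<in> crystal_step lam n" using one_step tsb by blast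
  then obtain i where Fi: "crystal_F i a = Some b" by (auto simp: crystal_step_def)
  obtain j where j: "j < length (reading_word a)" "reading_word a ! j = i"
    "reading_word b = (reading_word a)[j := Suc i]" using F_word[OF Fi] by blast
  define pre where "pre = concat (rev R)"
  have rwa: "reading_word a = pre @ A1 Q @ Z2 P Q" by (simp add: a_def reading_word_def pre_def)
  have rwb: "reading_word b = pre @ B1 Q @ Z2 P Q" by (simp add: b_def reading_word_def pre_def)
  have ka: "reading_word a ! (length pre + Q) = 2" by (simp add: rwa nth_append defs)
  have kb: "reading_word b ! (length pre + Q) = 3" by (simp add: rwb nth_append defs)
  have klt: "length pre + Q < length (reading_word a)" by (simp add: rwa defs)
  have "j = length pre + Q"
  proof (rule ccontr)
    assume "j \<noteq> length pre + Q"
    then have "reading_word b ! (length pre + Q) = reading_word a ! (length pre + Q)"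
      using j(3) by simp
    then show False using ka kb by simp
  qed
  then have "i = 2" using j(2) ka by simp
  then have "Z3 P Q = Z2 P Q" using Fi Fg b_def by simp
  then show False by (simp add: defs)
qed

end
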